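(* Let $S$ be a finite $p$-group, $\mathcal{A}$ a divisible $S$-algebra, and $\varphi:P\to Q$, $\psi:Q\to R$ isomorphisms of $\mathfrak{F}_S(\mathcal{A})$. If $u_\varphi\in\mathcal{A}(\varphi)$ is a twisted unit of $\varphi$ and $u_\psi\in\mathcal{A}(\psi)$ is a twisted unit of $\psi$, then $u_\psi u_\varphi\in\mathcal{A}(\psi\varphi)$ is a twisted unit of $\psi\varphi$.
   Context: $\mathcal{O}$ is a complete local noetherian domain with maximal ideal $\mathfrak{m}$ and algebraically closed residue field of characteristic $p$. An interior $S$-algebra is an $\mathcal{O}$-free finite-rank $\mathcal{O}$-algebra $\mathcal{A}$ with group homomorphism $S\to\mathcal{A}^\times$; it is bifree if it has an $\mathcal{O}$-basis $Y$ with $sY=Y=Ys$ ($s\in S$) on which left and right actions are free. For $P\le S$ and injective $\varphi:P\to S$, $\mathcal{A}(\varphi)$ is the Brauer quotient $\mathcal{A}^\Delta/(\mathfrak{m}\mathcal{A}^\Delta+\sum_{V<\Delta}\mathrm{tr}_V^\Delta\mathcal{A}^V)$ for $\Delta=\Delta(\varphi,P)=\{(\varphi(p),p)\}\le S\times S$ acting by $(s,t)a=sat^{-1}$, with quotient map $\mathrm{br}_\varphi$; $\mathcal{A}(P)=\mathcal{A}(\iota_P)$. Multiplication induces $\mathcal{A}(\psi)\times\mathcal{A}(\varphi)\to\mathcal{A}(\psi\varphi)$, $\mathrm{br}_\psi(a)\mathrm{br}_\varphi(c)=\mathrm{br}_{\psi\varphi}(ac)$. $\mathfrak{F}_S(\mathcal{A})$: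 objects subgroups of $S$, $\mathrm{Hom}(P,Q)=\{\varphi:P\to Q$ injective$:\mathcal{A}(\varphi)\ne0\}$; $\mathcal{A}$ is divisible if it is bifree and $\mathfrak{F}_S(\mathcal{A})$ contains all inclusions, is closed under composition, and each morphism is an inclusion composed with an isomorphism of $\mathfrak{F}_S(\mathcal{A})$. For an isomorphism $\varphi:P\to Q$ of $\mathfrak{F}_S(\mathcal{A})$, a twisted unit of $\varphi$ is $u\in\mathcal{A}(\varphi)$ such that there is $u^\dagger\in\mathcal{A}(\varphi^{-1})$ with $u^\dagger u=1_{\mathcal{A}(P)}$. *)

theory Defs
  imports "HOL-Algebra.Group" "HOL-Algebra.Coset" "HOL-Computational_Algebra.Primes"
begin

text \<open>The maximal ideal of the local ring O is the set of non-units.\<close>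
definition nonunits :: "'r::comm_ring_1 set" where
  "nonunits = {r. \<not> r dvd 1}"

inductive_set ideal_span :: "'r::comm_ring_1 set \<Rightarrow> 'r set" for X where
  zero: "0 \<in> ideal_span X"
| gen: "x \<in> X \<Longrightarrow> r * x \<in> ideal_span X"
| add: "x \<in> ideal_span X \<Longrightarrow> y \<in> ideal_span X \<Longrightarrow> x + y \<in> ideal_span X"

primrec mpow :: "nat \<Rightarrow> 'r::comm_ring_1 set" where
  "mpow 0 = UNIV"
| "mpow (Suc k) = ideal_span {a * b | a b. a \<in> nonunits \<and> b \<in> mpow k}"

definition is_ideal :: "'r::comm_ring_1 set \<Rightarrow> bool" where
  "is_ideal I \<longleftrightarrow> 0 \<in> I \<and> (\<forall>x\<in>I. \<forall>y\<in>I. x + y \<in> I) \<and> (\<forall>r. \<forall>x\<in>I. r * x \<in> I)"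

text \<open>O is a complete local noetherian domain whose residue field O/m is algebraically
  closed of characteristic p.\<close>
definition CLN_domain :: "nat \<Rightarrow> 'r::idom itself \<Rightarrow> bool" where
  "CLN_domain p _ \<longleftrightarrow>
     is_ideal (nonunits :: 'r set)
   \<and> (\<forall>I::'r set. is_ideal I \<longrightarrow> (\<exists>F. finite F \<and> I = ideal_span F))
   \<and> (\<forall>x::nat \<Rightarrow> 'r. (\<forall>k. \<exists>N. \<forall>n\<ge>N. x n - x N \<in> mpow k)
          \<longrightarrow> (\<exists>L. \<forall>k. \<exists>N. \<forall>n\<ge>N. x n - L \<in> mpow k))
   \<and> (\<forall>n::nat. n \<ge> 1 \<longrightarrow> (\<forall>c::nat \<Rightarrow> 'r. \<exists>x. x ^ n + (\<Sum>i<n. c i * x ^ i) \<in> nonunits))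
   \<and> prime p \<and> (of_nat p :: 'r) \<in> nonunits"

definition O_algebra :: "('r::comm_ring_1 \<Rightarrow> 'a::ring_1 \<Rightarrow> 'a) \<Rightarrow> bool" where
  "O_algebra sm \<longleftrightarrow>
     (\<forall>r a b. sm r (a + b) = sm r a + sm r b)
   \<and> (\<forall>r s a. sm (r + s) a = sm r a + sm s a)
   \<and> (\<forall>r s a. sm (r * s) a = sm r (sm s a))
   \<and> (\<forall>a. sm 1 a = a)
   \<and> (\<forall>r a b. sm r (a * b) = sm r a * b \<and> sm r (a * b) = a * sm r b)"

definition is_basis :: "('r::comm_ring_1 \<Rightarrow> 'a::ring_1 \<Rightarrow> 'a) \<Rightarrow> 'a set \<Rightarrow> bool" where
  "is_basis sm Y \<longleftrightarrow> finite Y \<and>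
     (\<forall>a. \<exists>!c. (\<forall>y. y \<notin> Y \<longrightarrow> c y = 0) \<and> a = (\<Sum>y\<in>Y. sm (c y) y))"

definition interior_alg ::
  "('g, 'b) monoid_scheme \<Rightarrow> ('g \<Rightarrow> 'a::ring_1) \<Rightarrow> ('r::comm_ring_1 \<Rightarrow> 'a \<Rightarrow> 'a) \<Rightarrow> bool" where
  "interior_alg S \<eta> sm \<longleftrightarrow> O_algebra sm \<and> (\<exists>Y. is_basis sm Y)
     \<and> (\<forall>s\<in>carrier S. \<forall>t\<in>carrier S. \<eta> (s \<otimes>\<^bsub>S\<^esub> t) = \<eta> s * \<eta> t)
     \<and> \<eta> \<one>\<^bsub>S\<^esub> = 1"

definition bifree ::
  "('g, 'b) monoid_scheme \<Rightarrow> ('g \<Rightarrow> 'a::ring_1) \<Rightarrow> ('r::comm_ring_1 \<Rightarrow> 'a \<Rightarrow> 'a) \<Rightarrow> bool" where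
  "bifree S \<eta> sm \<longleftrightarrow> interior_alg S \<eta> sm \<and>
     (\<exists>Y. is_basis sm Y \<and>
        (\<forall>s\<in>carrier S. (\<lambda>y. \<eta> s * y) ` Y = Y \<and> (\<lambda>y. y * \<eta> s) ` Y = Y) \<and>
        (\<forall>s\<in>carrier S. \<forall>y\<in>Y. \<eta> s * y = y \<longrightarrow> s = \<one>\<^bsub>S\<^esub>) \<and>
        (\<forall>s\<in>carrier S. \<forall>y\<in>Y. y * \<eta> s = y \<longrightarrow> s = \<one>\<^bsub>S\<^esub>))"

definition act :: "('g, 'b) monoid_scheme \<Rightarrow> ('g \<Rightarrow> 'a::ring_1) \<Rightarrow> 'g \<times> 'g \<Rightarrow> 'a \<Rightarrow> 'a" where
  "act S \<eta> g a = \<eta> (fst g) * a * \<eta> (inv\<^bsub>S\<^esub> (snd g))"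

definition Delta :: "('g \<Rightarrow> 'g) \<Rightarrow> 'g set \<Rightarrow> ('g \<times> 'g) set" where
  "Delta \<phi> P = {(\<phi> x, x) | x. x \<in> P}"

definition fixpts :: "('g, 'b) monoid_scheme \<Rightarrow> ('g \<Rightarrow> 'a::ring_1) \<Rightarrow> ('g \<times> 'g) set \<Rightarrow> 'a set" where
  "fixpts S \<eta> V = {a. \<forall>g\<in>V. act S \<eta> g a = a}"

definition trace :: "('g, 'b) monoid_scheme \<Rightarrow> ('g \<Rightarrow> 'a::ring_1)
    \<Rightarrow> ('g \<times> 'g) set \<Rightarrow> ('g \<times> 'g) set \<Rightarrow> 'a \<Rightarrow> 'a" where
  "trace S \<eta> D V a = (\<Sum>C\<in>(\<lambda>g. g <#\<^bsub>S \<times>\<times> S\<^esub> V) ` D. act S \<eta> (SOME g. g \<in> C) a)"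

text \<open>The kernel m A^D + sum_{V<D} tr_V^D(A^V) of the Brauer quotient map.\<close>
inductive_set bker :: "('g, 'b) monoid_scheme \<Rightarrow> ('g \<Rightarrow> 'a::ring_1) \<Rightarrow> ('r::comm_ring_1 \<Rightarrow> 'a \<Rightarrow> 'a)
    \<Rightarrow> ('g \<times> 'g) set \<Rightarrow> 'a set" for S \<eta> sm D where
  zero: "0 \<in> bker S \<eta> sm D"
| mA: "r \<in> nonunits \<Longrightarrow> a \<in> fixpts S \<eta> D \<Longrightarrow> sm r a \<in> bker S \<eta> sm D"
| tr: "subgroup V (S \<times>\<times> S) \<Longrightarrow> V \<subset> D \<Longrightarrow> b \<in> fixpts S \<eta> V \<Longrightarrow> trace S \<eta> D V b \<in> bker S \<eta> sm D"
| add: "x \<in> bker S \<eta> sm D \<Longrightarrow> y \<in> bker S \<eta> sm D \<Longrightarrow> x + y \<in> bker S \<eta> sm D"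
| neg: "x \<in> bker S \<eta> sm D \<Longrightarrow> - x \<in> bker S \<eta> sm D"

text \<open>Elements of the Brauer quotient are cosets; br is the quotient map.\<close>
definition br :: "('g, 'b) monoid_scheme \<Rightarrow> ('g \<Rightarrow> 'a::ring_1) \<Rightarrow> ('r::comm_ring_1 \<Rightarrow> 'a \<Rightarrow> 'a)
    \<Rightarrow> ('g \<times> 'g) set \<Rightarrow> 'a \<Rightarrow> 'a set" where
  "br S \<eta> sm D a = (\<lambda>k. a + k) ` bker S \<eta> sm D"

definition BQ :: "('g, 'b) monoid_scheme \<Rightarrow> ('g \<Rightarrow> 'a::ring_1) \<Rightarrow> ('r::comm_ring_1 \<Rightarrow> 'a \<Rightarrow> 'a)
    \<Rightarrow> ('g \<Rightarrow> 'g) \<Rightarrow> 'g set \<Rightarrow> 'a set set" where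
  "BQ S \<eta> sm \<phi> P = br S \<eta> sm (Delta \<phi> P) ` fixpts S \<eta> (Delta \<phi> P)"

definition BQ_nonzero :: "('g, 'b) monoid_scheme \<Rightarrow> ('g \<Rightarrow> 'a::ring_1) \<Rightarrow> ('r::comm_ring_1 \<Rightarrow> 'a \<Rightarrow> 'a)
    \<Rightarrow> ('g \<Rightarrow> 'g) \<Rightarrow> 'g set \<Rightarrow> bool" where
  "BQ_nonzero S \<eta> sm \<phi> P \<longleftrightarrow> \<not> fixpts S \<eta> (Delta \<phi> P) \<subseteq> bker S \<eta> sm (Delta \<phi> P)"

text \<open>Product A(psi) x A(phi) -> A(psi phi), br_psi(a) br_phi(c) = br_{psi phi}(a c),
  where phi has domain P.\<close>
definition bmul :: "('g, 'b) monoid_scheme \<Rightarrow> ('g \<Rightarrow> 'a::ring_1) \<Rightarrow> ('r::comm_ring_1 \<Rightarrow> 'a \<Rightarrow> 'a)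
    \<Rightarrow> ('g \<Rightarrow> 'g) \<Rightarrow> ('g \<Rightarrow> 'g) \<Rightarrow> 'g set \<Rightarrow> 'a set \<Rightarrow> 'a set \<Rightarrow> 'a set" where
  "bmul S \<eta> sm \<psi> \<phi> P u w = br S \<eta> sm (Delta (\<psi> \<circ> \<phi>) P) ((SOME a. a \<in> u) * (SOME c. c \<in> w))"

definition bone :: "('g, 'b) monoid_scheme \<Rightarrow> ('g \<Rightarrow> 'a::ring_1) \<Rightarrow> ('r::comm_ring_1 \<Rightarrow> 'a \<Rightarrow> 'a)
    \<Rightarrow> 'g set \<Rightarrow> 'a set" where
  "bone S \<eta> sm P = br S \<eta> sm (Delta id P) 1"

definition Fmor :: "('g, 'b) monoid_scheme \<Rightarrow> ('g \<Rightarrow> 'a::ring_1) \<Rightarrow> ('r::comm_ring_1 \<Rightarrow> 'a \<Rightarrow> 'a)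
    \<Rightarrow> 'g set \<Rightarrow> 'g set \<Rightarrow> ('g \<Rightarrow> 'g) \<Rightarrow> bool" where
  "Fmor S \<eta> sm P Q \<phi> \<longleftrightarrow> subgroup P S \<and> subgroup Q S
     \<and> \<phi> \<in> hom (S\<lparr>carrier := P\<rparr>) S \<and> inj_on \<phi> P \<and> \<phi> ` P \<subseteq> Q
     \<and> BQ_nonzero S \<eta> sm \<phi> P"

definition Fiso :: "('g, 'b) monoid_scheme \<Rightarrow> ('g \<Rightarrow> 'a::ring_1) \<Rightarrow> ('r::comm_ring_1 \<Rightarrow> 'a \<Rightarrow> 'a)
    \<Rightarrow> 'g set \<Rightarrow> 'g set \<Rightarrow> ('g \<Rightarrow> 'g) \<Rightarrow> bool" where
  "Fiso S \<eta> sm P Q \<phi> \<longleftrightarrow> Fmor S \<eta> sm P Q \<phi> \<and> \<phi> ` P = Q \<and> Fmor S \<eta> sm Q P (inv_into P \<phi>)"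

definition divisible :: "('g, 'b) monoid_scheme \<Rightarrow> ('g \<Rightarrow> 'a::ring_1) \<Rightarrow> ('r::comm_ring_1 \<Rightarrow> 'a \<Rightarrow> 'a) \<Rightarrow> bool" where
  "divisible S \<eta> sm \<longleftrightarrow> bifree S \<eta> sm
     \<and> (\<forall>P Q. subgroup P S \<and> subgroup Q S \<and> P \<subseteq> Q \<longrightarrow> Fmor S \<eta> sm P Q id)
     \<and> (\<forall>P Q R \<phi> \<psi>. Fmor S \<eta> sm P Q \<phi> \<and> Fmor S \<eta> sm Q R \<psi> \<longrightarrow> Fmor S \<eta> sm P R (\<psi> \<circ> \<phi>))
     \<and> (\<forall>P Q \<phi>. Fmor S \<eta> sm P Q \<phi> \<longrightarrow> (\<exists>Q'. Q' \<subseteq> Q \<and> Fiso S \<eta> sm P Q' \<phi>))"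

definition twisted_unit :: "('g, 'b) monoid_scheme \<Rightarrow> ('g \<Rightarrow> 'a::ring_1) \<Rightarrow> ('r::comm_ring_1 \<Rightarrow> 'a \<Rightarrow> 'a)
    \<Rightarrow> 'g set \<Rightarrow> ('g \<Rightarrow> 'g) \<Rightarrow> 'a set \<Rightarrow> bool" where
  "twisted_unit S \<eta> sm P \<phi> u \<longleftrightarrow> u \<in> BQ S \<eta> sm \<phi> P \<and>
     (\<exists>v \<in> BQ S \<eta> sm (inv_into P \<phi>) (\<phi> ` P).
        bmul S \<eta> sm (inv_into P \<phi>) \<phi> P v u = bone S \<eta> sm P)"

end

theory Submission
  imports Defs
begin


lemma l_coset_img: "a <#\<^bsub>G\<^esub> H = (\<lambda>h. a \<otimes>\<^bsub>G\<^esub> h) ` H" by (auto simp: l_coset_def)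

lemma (in group) lcos_self: "subgroup H G \<Longrightarrow> g \<in> carrier G \<Longrightarrow> g \<in> g <# H"
  unfolding l_coset_img by (metis image_eqI r_one subgroup.one_closed)

lemma coset_sub: "subgroup D H \<Longrightarrow> V \<subseteq> D \<Longrightarrow> g \<in> D \<Longrightarrow> g <#\<^bsub>H\<^esub> V \<subseteq> D"
  unfolding l_coset_img by (auto intro: subgroup.m_closed)

lemma img_subgroup:
  assumes H: "group H" and K: "group K" and V: "subgroup V H"
    and c: "\<And>x. x\<in>V \<Longrightarrow> \<theta> x \<in> carrier K"
    and m: "\<And>x y. x\<in>V \<Longrightarrow> y\<in>V \<Longrightarrow> \<theta> (x \<otimes>\<^bsub>H\<^esub> y) = \<theta> x \<otimes>\<^bsub>K\<^esub> \<theta> y"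
  shows "subgroup (\<theta> ` V) K"
proof -
  interpret H: group H by fact
  interpret K: group K by fact
  have o: "\<one>\<^bsub>H\<^esub> \<in> V" using subgroup.one_closed[OF V] .
  have oc: "\<one>\<^bsub>H\<^esub> \<in> carrier H" by simp
  have "\<theta> \<one>\<^bsub>H\<^esub> \<otimes>\<^bsub>K\<^esub> \<theta> \<one>\<^bsub>H\<^esub> = \<theta> \<one>\<^bsub>H\<^esub>" using m[OF o o] H.l_one[OF oc] by simp
  then have one: "\<theta> \<one>\<^bsub>H\<^esub> = \<one>\<^bsub>K\<^esub>" using K.l_cancel_one[OF c[OF o] c[OF o]] by simp
  show ?thesis
  proof (rule K.subgroupI)
    show "\<theta> ` V \<subseteq> carrier K" using c by blast
    show "\<theta> ` V \<noteq> {}" using o by blast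
  next
    fix a assume "a \<in> \<theta> ` V" then obtain x where x: "x\<in>V" "a = \<theta> x" by blast
    have ix: "inv\<^bsub>H\<^esub> x \<in> V" using subgroup.m_inv_closed[OF V x(1)] .
    have xc: "x \<in> carrier H" using subgroup.mem_carrier[OF V x(1)] .
    have "\<theta> (inv\<^bsub>H\<^esub> x) \<otimes>\<^bsub>K\<^esub> \<theta> x = \<one>\<^bsub>K\<^esub>" using m[OF ix x(1)] H.l_inv[OF xc] one by simp
    then have "inv\<^bsub>K\<^esub> (\<theta> x) = \<theta> (inv\<^bsub>H\<^esub> x)" using K.inv_equality c ix x(1) by blast
    then show "inv\<^bsub>K\<^esub> a \<in> \<theta> ` V" using x ix by simp
  next
    fix a b assume "a \<in> \<theta>`V" "b \<in> \<theta>`V"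
    then obtain x y where "x\<in>V" "y\<in>V" "a = \<theta> x" "b = \<theta> y" by blast
    then show "a \<otimes>\<^bsub>K\<^esub> b \<in> \<theta>`V" using m subgroup.m_closed[OF V] by (metis image_eqI)
  qed
qed

lemma Delta_img: "Delta f P = (\<lambda>x. (f x, x)) ` P" by (auto simp: Delta_def)

lemma Delta_cong: "(\<And>x. x\<in>P \<Longrightarrow> f x = g x) \<Longrightarrow> Delta f P = Delta g P"
  unfolding Delta_img by auto

definition homon :: "('g,'b) monoid_scheme \<Rightarrow> 'g set \<Rightarrow> ('g\<Rightarrow>'g) \<Rightarrow> bool" where
  "homon S P f \<longleftrightarrow> (\<forall>x\<in>P. f x \<in> carrier S) \<and> (\<forall>x\<in>P. \<forall>y\<in>P. f (x \<otimes>\<^bsub>S\<^esub> y) = f x \<otimes>\<^bsub>S\<^esub> f y)"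

lemma homon_hom: "f \<in> hom (S\<lparr>carrier := P\<rparr>) S \<Longrightarrow> homon S P f"
  by (auto simp: hom_def homon_def)

lemma homon_comp: "homon S Q f \<Longrightarrow> homon S P g \<Longrightarrow> g ` P \<subseteq> Q \<Longrightarrow> homon S P (f \<circ> g)"
  unfolding homon_def by (auto simp: image_subset_iff)

locale balg =
  fixes S :: "('g,'b) monoid_scheme" and \<eta> :: "'g \<Rightarrow> 'a::ring_1" and sm :: "'r::comm_ring_1 \<Rightarrow> 'a \<Rightarrow> 'a"
  assumes grp: "group S" and oa: "O_algebra sm"
    and eta_mult: "\<And>s t. s \<in> carrier S \<Longrightarrow> t \<in> carrier S \<Longrightarrow> \<eta> (s \<otimes>\<^bsub>S\<^esub> t) = \<eta> s * \<eta> t"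
    and eta_one: "\<eta> \<one>\<^bsub>S\<^esub> = 1"
begin

lemma coset_transport:
  fixes F F' :: "'x \<Rightarrow> 'c::comm_monoid_add"
  assumes sub: "\<And>g. g\<in>D \<Longrightarrow> g <#\<^bsub>G\<^esub> V \<subseteq> D" and mem: "\<And>g. g\<in>D \<Longrightarrow> g \<in> g <#\<^bsub>G\<^esub> V"
   and inj: "inj_on \<theta> D" and img: "\<theta>`D = D'"
   and cos: "\<And>g. g\<in>D \<Longrightarrow> \<theta>`(g <#\<^bsub>G\<^esub> V) = \<theta> g <#\<^bsub>G'\<^esub> V'"
   and ind: "\<And>g x. g\<in>D \<Longrightarrow> x \<in> g <#\<^bsub>G\<^esub> V \<Longrightarrow> F x = F g"
   and tr: "\<And>g. g\<in>D \<Longrightarrow> F' (\<theta> g) = F g"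
  shows "(\<Sum>C\<in>(\<lambda>g. g <#\<^bsub>G\<^esub> V)`D. F (SOME x. x\<in>C)) = (\<Sum>C\<in>(\<lambda>g. g <#\<^bsub>G'\<^esub> V')`D'. F' (SOME x. x\<in>C))"
proof -
  let ?A = "(\<lambda>g. g <#\<^bsub>G\<^esub> V)`D" and ?B = "(\<lambda>g. g <#\<^bsub>G'\<^esub> V')`D'"
  have bij: "bij_betw (image \<theta>) ?A ?B"
  proof (rule bij_betwI')
    fix X Y assume "X \<in> ?A" "Y \<in> ?A"
    then have "X \<subseteq> D" "Y \<subseteq> D" using sub by auto
    then show "(\<theta>`X = \<theta>`Y) = (X = Y)" using inj_on_image_eq_iff[OF inj] by blast
  next
    fix X assume "X\<in>?A" then obtain g where "g\<in>D" "X = g <#\<^bsub>G\<^esub> V" by auto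
    then show "\<theta>`X \<in> ?B" using cos img by auto
  next
    fix Y assume "Y\<in>?B" then obtain g' where g': "g'\<in>D'" "Y = g' <#\<^bsub>G'\<^esub> V'" by auto
    then obtain g where "g\<in>D" "g' = \<theta> g" using img by auto
    then show "\<exists>X\<in>?A. Y = \<theta>`X" using cos g' by auto
  qed
  have "(\<Sum>C\<in>?B. F' (SOME x. x\<in>C)) = (\<Sum>C\<in>?A. F' (SOME x. x \<in> \<theta>`C))"
    using sum.reindex_bij_betw[OF bij, of "\<lambda>C. F' (SOME x. x\<in>C)"] by simp
  also have "... = (\<Sum>C\<in>?A. F (SOME x. x\<in>C))"
  proof (rule sum.cong[OF refl])
    fix C assume "C\<in>?A" then obtain g where g: "g\<in>D" "C = g <#\<^bsub>G\<^esub> V" by auto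
    have "(SOME x. x\<in>C) \<in> C" using mem g by (metis someI)
    then have 1: "F (SOME x. x\<in>C) = F g" using ind g by auto
    have "(SOME x. x\<in>\<theta>`C) \<in> \<theta>`C" using mem g by (meson imageI someI)
    then obtain y where y: "y\<in>C" "(SOME x. x\<in>\<theta>`C) = \<theta> y" by auto
    have yD: "y \<in> D" using sub g y(1) by auto
    show "F' (SOME x. x \<in> \<theta>`C) = F (SOME x. x\<in>C)" using tr[OF yD] ind[OF g(1)] y g(2) 1 by simp
  qed
  finally show ?thesis by simp
qed

abbreviation "G \<equiv> S \<times>\<times> S"

lemma G_group: "group G" using grp by (simp add: DirProd_group)

lemma eta_inv_l: "s \<in> carrier S \<Longrightarrow> \<eta> (inv\<^bsub>S\<^esub> s) * \<eta> s = 1"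
  by (metis eta_mult eta_one grp group.inv_closed group.l_inv)
lemma eta_inv_r: "s \<in> carrier S \<Longrightarrow> \<eta> s * \<eta> (inv\<^bsub>S\<^esub> s) = 1"
  by (metis eta_mult eta_one grp group.inv_closed group.r_inv)

lemma sm_mult_l: "sm r (a * b) = sm r a * b" using oa unfolding O_algebra_def by blast
lemma sm_mult_r: "sm r (a * b) = a * sm r b" using oa unfolding O_algebra_def by blast
lemma sm_add: "sm r (a + b) = sm r a + sm r b" using oa unfolding O_algebra_def by blast

lemma act_mult:
  assumes "g1 \<in> carrier G" "g2 \<in> carrier G"
  shows "act S \<eta> (g1 \<otimes>\<^bsub>G\<^esub> g2) a = act S \<eta> g1 (act S \<eta> g2 a)"
proof -
  obtain s1 t1 s2 t2 where e: "g1 = (s1,t1)" "g2 = (s2,t2)" by (cases g1, cases g2) auto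
  have c: "s1 \<in> carrier S" "t1 \<in> carrier S" "s2 \<in> carrier S" "t2 \<in> carrier S" using assms e by auto
  have "inv\<^bsub>S\<^esub> (t1 \<otimes>\<^bsub>S\<^esub> t2) = inv\<^bsub>S\<^esub> t2 \<otimes>\<^bsub>S\<^esub> inv\<^bsub>S\<^esub> t1"
    using c grp by (simp add: group.inv_mult_group)
  then show ?thesis using c e grp
    by (simp add: act_def eta_mult group.inv_closed mult.assoc)
qed

lemma act_add: "act S \<eta> g (a + b) = act S \<eta> g a + act S \<eta> g b"
  by (simp add: act_def distrib_left distrib_right)
lemma act_zero: "act S \<eta> g 0 = 0" by (simp add: act_def)
lemma act_neg: "act S \<eta> g (- a) = - act S \<eta> g a" by (simp add: act_def)
lemma act_sm: "act S \<eta> g (sm r a) = sm r (act S \<eta> g a)"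
  unfolding act_def by (metis sm_mult_l sm_mult_r)
lemma act_sum: "act S \<eta> g (sum f A) = (\<Sum>x\<in>A. act S \<eta> g (f x))"
  by (simp add: act_def sum_distrib_left sum_distrib_right)


lemma ind0:
  assumes "subgroup V G" "b \<in> fixpts S \<eta> V" "g \<in> carrier G" "x \<in> g <#\<^bsub>G\<^esub> V"
  shows "act S \<eta> x b = act S \<eta> g b"
proof -
  have "x \<in> (\<lambda>h. g \<otimes>\<^bsub>G\<^esub> h) ` V" using assms(4) by (simp only: l_coset_img)
  then obtain v where v: "v \<in> V" "x = g \<otimes>\<^bsub>G\<^esub> v" by (rule imageE) simp
  have vc: "v \<in> carrier G" using subgroup.mem_carrier[OF assms(1) v(1)] .
  have "act S \<eta> v b = b" using assms(2) v(1) unfolding fixpts_def by blast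
  then show ?thesis using v(2) act_mult[OF assms(3) vc, of b] by simp
qed

lemma trace_fixed:
  assumes D: "subgroup D G" and V: "subgroup V G" "V \<subseteq> D" and b: "b \<in> fixpts S \<eta> V" and h: "h \<in> D"
  shows "act S \<eta> h (trace S \<eta> D V b) = trace S \<eta> D V b"
proof -
  interpret Gg: group G by (rule G_group)
  have Dc: "D \<subseteq> carrier G" using D subgroup.subset by blast
  have Vc: "V \<subseteq> carrier G" using V subgroup.subset by blast
  have hc: "h \<in> carrier G" using h Dc by blast
  have "(\<Sum>C\<in>(\<lambda>g. g <#\<^bsub>G\<^esub> V)`D. act S \<eta> h (act S \<eta> (SOME x. x\<in>C) b))
      = (\<Sum>C\<in>(\<lambda>g. g <#\<^bsub>G\<^esub> V)`D. act S \<eta> (SOME x. x\<in>C) b)"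
  proof (rule coset_transport[where \<theta>="\<lambda>g. h \<otimes>\<^bsub>G\<^esub> g" and F="\<lambda>g. act S \<eta> h (act S \<eta> g b)" and F'="\<lambda>g. act S \<eta> g b" and D'=D and V'=V and G'=G])
    fix g assume g: "g \<in> D"
    have gc: "g \<in> carrier G" using g Dc by blast
    show "g <#\<^bsub>G\<^esub> V \<subseteq> D"
    proof
      fix x assume "x \<in> g <#\<^bsub>G\<^esub> V"
      then have "x \<in> (\<lambda>h. g \<otimes>\<^bsub>G\<^esub> h) ` V" by (simp only: l_coset_img)
      then obtain v where "v\<in>V" "x = g \<otimes>\<^bsub>G\<^esub> v" by (rule imageE) simp
      then show "x\<in>D" using subgroup.m_closed[OF D g subsetD[OF V(2)]] by simp
    qed
    show "g \<in> g <#\<^bsub>G\<^esub> V" using Gg.lcos_self[OF V(1) gc] .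
    show "(\<lambda>g. h \<otimes>\<^bsub>G\<^esub> g) ` (g <#\<^bsub>G\<^esub> V) = (h \<otimes>\<^bsub>G\<^esub> g) <#\<^bsub>G\<^esub> V"
      using Gg.lcos_m_assoc[OF Vc hc gc] by (simp only: l_coset_img)
    show "act S \<eta> (h \<otimes>\<^bsub>G\<^esub> g) b = act S \<eta> h (act S \<eta> g b)"
      using act_mult[OF hc gc] .
    fix x assume xg: "x \<in> g <#\<^bsub>G\<^esub> V"
    have "act S \<eta> x b = act S \<eta> g b" by (rule ind0[OF V(1) b gc xg])
    then show "act S \<eta> h (act S \<eta> x b) = act S \<eta> h (act S \<eta> g b)" by (rule arg_cong)
  next
    show "inj_on (\<lambda>g. h \<otimes>\<^bsub>G\<^esub> g) D"
    proof (rule inj_onI)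
      fix x y assume xy: "x \<in> D" "y \<in> D" "h \<otimes>\<^bsub>G\<^esub> x = h \<otimes>\<^bsub>G\<^esub> y"
      have "x \<in> carrier G" "y \<in> carrier G" using xy(1,2) Dc by (auto simp only: subsetD)
      then show "x = y" using xy(3) hc by (simp add: Gg.Units_eq)
    qed
    show "(\<lambda>g. h \<otimes>\<^bsub>G\<^esub> g) ` D = D"
    proof
      show "(\<lambda>g. h \<otimes>\<^bsub>G\<^esub> g) ` D \<subseteq> D" using subgroup.m_closed[OF D h] by blast
      show "D \<subseteq> (\<lambda>g. h \<otimes>\<^bsub>G\<^esub> g) ` D"
      proof
        fix y assume y: "y \<in> D"
        have m: "inv\<^bsub>G\<^esub> h \<otimes>\<^bsub>G\<^esub> y \<in> D" using subgroup.m_closed[OF D subgroup.m_inv_closed[OF D h] y] .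
        have yc: "y \<in> carrier G" using subsetD[OF Dc y] .
        have e: "y = h \<otimes>\<^bsub>G\<^esub> (inv\<^bsub>G\<^esub> h \<otimes>\<^bsub>G\<^esub> y)" by (simp only: Gg.m_assoc[symmetric, OF hc Gg.inv_closed[OF hc] yc] Gg.r_inv[OF hc] Gg.l_one[OF yc])
        show "y \<in> (\<lambda>g. h \<otimes>\<^bsub>G\<^esub> g) ` D" by (rule image_eqI[where f="\<lambda>g. h \<otimes>\<^bsub>G\<^esub> g", OF e m])
      qed
    qed
  qed
  then show ?thesis unfolding trace_def act_sum .
qed

lemma bker_fixed:
  assumes D: "subgroup D G"
  shows "k \<in> bker S \<eta> sm D \<Longrightarrow> k \<in> fixpts S \<eta> D"
proof (induction rule: bker.induct)
  case zero then show ?case by (simp add: fixpts_def act_zero)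
next
  case (mA r a) then show ?case by (simp add: fixpts_def act_sm)
next
  case (tr V b) then show ?case using trace_fixed[OF D tr(1) _ tr(3)] by (auto simp: fixpts_def)
next
  case (add x y) then show ?case by (simp add: fixpts_def act_add)
next
  case (neg x) then show ?case by (simp add: fixpts_def act_neg)
qed

lemma transport_bker:
  assumes D: "subgroup D G" and Dc': "\<And>d. d\<in>D \<Longrightarrow> \<theta> d \<in> carrier G"
    and hm: "\<And>x y. x\<in>D \<Longrightarrow> y\<in>D \<Longrightarrow> \<theta> (x \<otimes>\<^bsub>G\<^esub> y) = \<theta> x \<otimes>\<^bsub>G\<^esub> \<theta> y"
    and inj: "inj_on \<theta> D"
    and M0: "M 0 = 0" and Madd: "\<And>x y. M (x+y) = M x + M y" and Mneg: "\<And>x. M (-x) = - M x"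
    and Msm: "\<And>r a. M (sm r a) = sm r (M a)"
    and Mact: "\<And>d b. d\<in>D \<Longrightarrow> M (act S \<eta> d b) = act S \<eta> (\<theta> d) (M b)"
  shows "k \<in> bker S \<eta> sm D \<Longrightarrow> M k \<in> bker S \<eta> sm (\<theta>`D)"
proof (induction rule: bker.induct)
  case zero then show ?case by (simp add: M0 bker.zero)
next
  case (mA r a)
  have "M a \<in> fixpts S \<eta> (\<theta>`D)" unfolding fixpts_def
  proof (intro CollectI ballI)
    fix g' assume "g' \<in> \<theta>`D" then obtain d where d: "d\<in>D" "g' = \<theta> d" by blast
    have "act S \<eta> d a = a" using mA(2) d(1) unfolding fixpts_def by blast
    then show "act S \<eta> g' (M a) = M a" using Mact[OF d(1), of a] d(2) by simp
  qed
  then show ?case using bker.mA[OF mA(1)] Msm by simp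
next
  case (tr V b)
  have Vsub: "V \<subseteq> D" using tr(2) by blast
  have Dc: "D \<subseteq> carrier G" using D subgroup.subset by blast
  have sV: "subgroup (\<theta>`V) G"
  proof (rule img_subgroup[OF G_group G_group tr(1)])
    fix x assume "x\<in>V" then show "\<theta> x \<in> carrier G" using Dc' Vsub by blast
  next
    fix x y assume "x\<in>V" "y\<in>V" then show "\<theta> (x \<otimes>\<^bsub>G\<^esub> y) = \<theta> x \<otimes>\<^bsub>G\<^esub> \<theta> y" using hm Vsub by blast
  qed
  have ss: "\<theta>`V \<subset> \<theta>`D" using inj_on_image_eq_iff[OF inj Vsub order_refl] tr(2) by blast
  have fb: "M b \<in> fixpts S \<eta> (\<theta>`V)" unfolding fixpts_def
  proof (intro CollectI ballI)
    fix g' assume "g' \<in> \<theta>`V" then obtain d where d: "d\<in>V" "g' = \<theta> d" by blast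
    have "act S \<eta> d b = b" using tr(3) d(1) unfolding fixpts_def by blast
    then show "act S \<eta> g' (M b) = M b" using Mact[of d b] d Vsub by auto
  qed
  have "M (trace S \<eta> D V b) = (\<Sum>C\<in>(\<lambda>g. g <#\<^bsub>G\<^esub> V)`D. M (act S \<eta> (SOME x. x\<in>C) b))"
    unfolding trace_def using sum_comp_morphism[of M, OF M0 Madd, of "\<lambda>C. act S \<eta> (SOME x. x\<in>C) b" "(\<lambda>g. g <#\<^bsub>G\<^esub> V)`D"] by (simp add: comp_def)
  also have "... = (\<Sum>C\<in>(\<lambda>g. g <#\<^bsub>G\<^esub> (\<theta>`V))`(\<theta>`D). act S \<eta> (SOME x. x\<in>C) (M b))"
  proof (rule coset_transport[where \<theta>=\<theta> and F="\<lambda>g. M (act S \<eta> g b)" and F'="\<lambda>g. act S \<eta> g (M b)"])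
    fix g assume g: "g \<in> D"
    have gc: "g \<in> carrier G" using g Dc by blast
    show "g <#\<^bsub>G\<^esub> V \<subseteq> D" using coset_sub[OF D Vsub g] .
    show "g \<in> g <#\<^bsub>G\<^esub> V" using group.lcos_self[OF G_group tr(1) gc] .
    show "\<theta> ` (g <#\<^bsub>G\<^esub> V) = \<theta> g <#\<^bsub>G\<^esub> \<theta> ` V"
    proof -
      have "\<theta> ` ((\<lambda>v. g \<otimes>\<^bsub>G\<^esub> v) ` V) = (\<lambda>v. \<theta> g \<otimes>\<^bsub>G\<^esub> \<theta> v) ` V"
        unfolding image_image using hm[OF g] Vsub by (intro image_cong refl) blast
      also have "... = (\<lambda>w. \<theta> g \<otimes>\<^bsub>G\<^esub> w) ` (\<theta> ` V)" by (simp only: image_image)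
      finally show ?thesis unfolding l_coset_img .
    qed
    show "act S \<eta> (\<theta> g) (M b) = M (act S \<eta> g b)" using Mact[OF g] by simp
    fix x assume "x \<in> g <#\<^bsub>G\<^esub> V"
    then show "M (act S \<eta> x b) = M (act S \<eta> g b)" using ind0[OF tr(1) tr(3) gc \<open>x \<in> g <#\<^bsub>G\<^esub> V\<close>] by simp
  next
    show "inj_on \<theta> D" by (rule inj)
  next
    show "\<theta>`D = \<theta>`D" by (rule refl)
  qed
  finally have "M (trace S \<eta> D V b) = trace S \<eta> (\<theta>`D) (\<theta>`V) (M b)" unfolding trace_def .
  then show ?case using bker.tr[OF sV ss fb] by simp
next
  case (add x y) then show ?case by (simp add: Madd bker.add)
next
  case (neg x) then show ?case by (simp add: Mneg bker.neg)
qed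

lemma Delta_subgroup:
  assumes "subgroup P S" "homon S P f"
  shows "subgroup (Delta f P) G"
  unfolding Delta_img
proof (rule img_subgroup[OF grp G_group assms(1)])
  fix x assume x: "x\<in>P"
  then show "(f x, x) \<in> carrier G" using assms subgroup.mem_carrier[OF assms(1) x] unfolding homon_def by simp
next
  fix x y assume "x\<in>P" "y\<in>P"
  then show "(f (x \<otimes>\<^bsub>S\<^esub> y), x \<otimes>\<^bsub>S\<^esub> y) = (f x, x) \<otimes>\<^bsub>G\<^esub> (f y, y)"
    using assms(2) unfolding homon_def by simp
qed

lemma id_left:
  assumes a: "a \<in> fixpts S \<eta> (Delta f Q1)" and y: "y \<in> Q1" "y \<in> carrier S"
  shows "a * act S \<eta> (y, x) b = act S \<eta> (f y, x) (a * b)"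
proof -
  have m: "(f y, y) \<in> Delta f Q1" using y(1) unfolding Delta_def by blast
  have "act S \<eta> (f y, y) a = a" using a m unfolding fixpts_def by blast
  then have e: "\<eta> (f y) * a * \<eta> (inv\<^bsub>S\<^esub> y) = a" unfolding act_def by simp
  have "a * \<eta> y = \<eta> (f y) * a * (\<eta> (inv\<^bsub>S\<^esub> y) * \<eta> y)"
    by (subst (1) e[symmetric]) (simp only: mult.assoc)
  then have e2: "a * \<eta> y = \<eta> (f y) * a" using eta_inv_l[OF y(2)] by simp
  have "a * act S \<eta> (y, x) b = (a * \<eta> y) * b * \<eta> (inv\<^bsub>S\<^esub> x)" by (simp only: act_def fst_conv snd_conv mult.assoc)
  also have "... = act S \<eta> (f y, x) (a * b)" unfolding e2 by (simp only: act_def fst_conv snd_conv mult.assoc)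
  finally show ?thesis .
qed

lemma id_right:
  assumes c: "c \<in> fixpts S \<eta> (Delta g P1)" and x: "x \<in> P1" "g x \<in> carrier S"
  shows "act S \<eta> (z, g x) b * c = act S \<eta> (z, x) (b * c)"
proof -
  have m: "(g x, x) \<in> Delta g P1" using x(1) unfolding Delta_def by blast
  have "act S \<eta> (g x, x) c = c" using c m unfolding fixpts_def by blast
  then have e: "\<eta> (g x) * c * \<eta> (inv\<^bsub>S\<^esub> x) = c" unfolding act_def by simp
  have "\<eta> (inv\<^bsub>S\<^esub> (g x)) * c = (\<eta> (inv\<^bsub>S\<^esub> (g x)) * \<eta> (g x)) * c * \<eta> (inv\<^bsub>S\<^esub> x)"
    by (subst (1) e[symmetric]) (simp only: mult.assoc)
  then have e2: "\<eta> (inv\<^bsub>S\<^esub> (g x)) * c = c * \<eta> (inv\<^bsub>S\<^esub> x)" using eta_inv_l[OF x(2)] by simp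
  have "act S \<eta> (z, g x) b * c = \<eta> z * b * (\<eta> (inv\<^bsub>S\<^esub> (g x)) * c)" by (simp only: act_def fst_conv snd_conv mult.assoc)
  also have "... = act S \<eta> (z, x) (b * c)" unfolding e2 by (simp only: act_def fst_conv snd_conv mult.assoc)
  finally show ?thesis .
qed

lemma mult_fix:
  assumes a: "a \<in> fixpts S \<eta> (Delta f Q1)" and c: "c \<in> fixpts S \<eta> (Delta g P1)"
    and gP: "g ` P1 \<subseteq> Q1" and Q1c: "Q1 \<subseteq> carrier S"
  shows "a * c \<in> fixpts S \<eta> (Delta (f \<circ> g) P1)"
  unfolding fixpts_def
proof (intro CollectI ballI)
  fix d assume "d \<in> Delta (f \<circ> g) P1"
  then obtain x where x: "x \<in> P1" "d = (f (g x), x)" unfolding Delta_def by auto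
  have gx: "g x \<in> Q1" "g x \<in> carrier S" using x gP Q1c by auto
  have m: "(g x, x) \<in> Delta g P1" using x(1) unfolding Delta_def by blast
  have "act S \<eta> d (a * c) = a * act S \<eta> (g x, x) c" using id_left[OF a gx] x by simp
  also have "... = a * c" using c m unfolding fixpts_def by simp
  finally show "act S \<eta> d (a * c) = a * c" .
qed

end


context balg
begin

lemma bker_left:
  assumes P1: "subgroup P1 S" and g: "homon S P1 g" and f: "homon S Q1 f" and gP: "g ` P1 \<subseteq> Q1"
    and Q1c: "Q1 \<subseteq> carrier S" and a: "a \<in> fixpts S \<eta> (Delta f Q1)"
    and k: "k \<in> bker S \<eta> sm (Delta g P1)"
  shows "a * k \<in> bker S \<eta> sm (Delta (f \<circ> g) P1)"
proof -
  let ?\<theta> = "\<lambda>d::'g\<times>'g. (f (fst d), snd d)"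
  have D: "subgroup (Delta g P1) G" by (rule Delta_subgroup[OF P1 g])
  have img: "?\<theta> ` Delta g P1 = Delta (f \<circ> g) P1" unfolding Delta_img image_image by simp
  have "a * k \<in> bker S \<eta> sm (?\<theta> ` Delta g P1)"
  proof (rule transport_bker[where M="\<lambda>k. a * k" and \<theta>="?\<theta>", OF D _ _ _ _ _ _ _ _ k])
    fix d assume "d \<in> Delta g P1"
    then obtain x where x: "x\<in>P1" "d = (g x, x)" unfolding Delta_img by blast
    have gx: "g x \<in> Q1" "g x \<in> carrier S" using x(1) gP Q1c by auto
    show "?\<theta> d \<in> carrier G" using x f gx subgroup.mem_carrier[OF P1 x(1)] unfolding homon_def by simp
  next
    fix d b assume "d \<in> Delta g P1"
    then obtain x where x: "x\<in>P1" "d = (g x, x)" unfolding Delta_img by blast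
    have gx: "g x \<in> Q1" "g x \<in> carrier S" using x(1) gP Q1c by auto
    show "a * act S \<eta> d b = act S \<eta> (?\<theta> d) (a * b)" using id_left[OF a gx] x by simp
  next
    fix d e assume "d \<in> Delta g P1" "e \<in> Delta g P1"
    then obtain x y where xy: "x\<in>P1" "d = (g x, x)" "y\<in>P1" "e = (g y, y)" unfolding Delta_img by blast
    have "g x \<in> Q1" "g y \<in> Q1" using xy gP by auto
    then have "f (g x \<otimes>\<^bsub>S\<^esub> g y) = f (g x) \<otimes>\<^bsub>S\<^esub> f (g y)" using f unfolding homon_def by blast
    then show "?\<theta> (d \<otimes>\<^bsub>G\<^esub> e) = ?\<theta> d \<otimes>\<^bsub>G\<^esub> ?\<theta> e" using xy by simp
  next
    show "inj_on ?\<theta> (Delta g P1)" unfolding Delta_img inj_on_def by auto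
  qed (simp_all add: distrib_left sm_mult_r)
  then show ?thesis using img by simp
qed

lemma bker_right:
  assumes P1: "subgroup P1 S" and Q1: "subgroup Q1 S" and f: "homon S Q1 f"
    and gih: "homon S Q1 gi" and gP: "g ` P1 = Q1"
    and gi1: "\<And>y. y \<in> Q1 \<Longrightarrow> gi y \<in> P1 \<and> g (gi y) = y"
    and gi2: "\<And>x. x \<in> P1 \<Longrightarrow> gi (g x) = x"
    and c: "c \<in> fixpts S \<eta> (Delta g P1)" and k: "k \<in> bker S \<eta> sm (Delta f Q1)"
  shows "k * c \<in> bker S \<eta> sm (Delta (f \<circ> g) P1)"
proof -
  let ?\<theta> = "\<lambda>d::'g\<times>'g. (fst d, gi (snd d))"
  have D: "subgroup (Delta f Q1) G" by (rule Delta_subgroup[OF Q1 f])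
  have "?\<theta> ` Delta f Q1 = (\<lambda>y. (f y, gi y)) ` (g ` P1)" unfolding Delta_img image_image gP by simp
  also have "... = Delta (f \<circ> g) P1" unfolding Delta_img image_image using gi2 by (intro image_cong refl) simp
  finally have img: "?\<theta> ` Delta f Q1 = Delta (f \<circ> g) P1" .
  have "k * c \<in> bker S \<eta> sm (?\<theta> ` Delta f Q1)"
  proof (rule transport_bker[where M="\<lambda>k. k * c" and \<theta>="?\<theta>", OF D _ _ _ _ _ _ _ _ k])
    fix d assume "d \<in> Delta f Q1"
    then obtain y where y: "y\<in>Q1" "d = (f y, y)" unfolding Delta_img by blast
    show "?\<theta> d \<in> carrier G" using y f gi1[OF y(1)] subgroup.mem_carrier[OF P1] unfolding homon_def by simp
  next
    fix d b assume "d \<in> Delta f Q1"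
    then obtain y where y: "y\<in>Q1" "d = (f y, y)" unfolding Delta_img by blast
    have x: "gi y \<in> P1" "g (gi y) = y" using gi1[OF y(1)] by auto
    have "g (gi y) \<in> carrier S" using x(2) y(1) subgroup.mem_carrier[OF Q1] by simp
    from id_right[OF c x(1) this, of "f y" b]
    show "act S \<eta> d b * c = act S \<eta> (?\<theta> d) (b * c)" using y x(2) by simp
  next
    fix d e assume "d \<in> Delta f Q1" "e \<in> Delta f Q1"
    then obtain x y where xy: "x\<in>Q1" "d = (f x, x)" "y\<in>Q1" "e = (f y, y)" unfolding Delta_img by blast
    have "gi (x \<otimes>\<^bsub>S\<^esub> y) = gi x \<otimes>\<^bsub>S\<^esub> gi y" using gih xy unfolding homon_def by blast
    then show "?\<theta> (d \<otimes>\<^bsub>G\<^esub> e) = ?\<theta> d \<otimes>\<^bsub>G\<^esub> ?\<theta> e" using xy by simp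
  next
    show "inj_on ?\<theta> (Delta f Q1)" unfolding Delta_img inj_on_def using gi1 by (auto) (metis)
  qed (simp_all add: distrib_right sm_mult_l)
  then show ?thesis using img by simp
qed

lemma br_self: "a \<in> br S \<eta> sm D a"
  unfolding br_def using bker.zero by (metis add.right_neutral image_eqI)

lemma br_memD: "x \<in> br S \<eta> sm D a \<Longrightarrow> \<exists>k\<in>bker S \<eta> sm D. x = a + k"
  unfolding br_def by blast

lemma rep_mem: "(SOME x. x \<in> br S \<eta> sm D a) \<in> br S \<eta> sm D a"
  using br_self by (metis someI)

lemma bker_diff: "x \<in> bker S \<eta> sm D \<Longrightarrow> y \<in> bker S \<eta> sm D \<Longrightarrow> x - y \<in> bker S \<eta> sm D"
  using bker.add bker.neg by (metis diff_conv_add_uminus)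

lemma br_eq:
  assumes "x - y \<in> bker S \<eta> sm D"
  shows "br S \<eta> sm D x = br S \<eta> sm D y"
proof
  show "br S \<eta> sm D x \<subseteq> br S \<eta> sm D y"
  proof
    fix z assume "z \<in> br S \<eta> sm D x"
    then obtain k where k: "k \<in> bker S \<eta> sm D" "z = x + k" using br_memD by blast
    have "z = y + ((x - y) + k)" using k by simp
    then show "z \<in> br S \<eta> sm D y" using bker.add[OF assms k(1)] unfolding br_def by blast
  qed
  show "br S \<eta> sm D y \<subseteq> br S \<eta> sm D x"
  proof
    fix z assume "z \<in> br S \<eta> sm D y"
    then obtain k where k: "k \<in> bker S \<eta> sm D" "z = y + k" using br_memD by blast
    have "z = x + (- (x - y) + k)" using k by simp
    then show "z \<in> br S \<eta> sm D x" using bker.add[OF bker.neg[OF assms] k(1)] unfolding br_def by blast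
  qed
qed

lemma br_eqD:
  assumes "br S \<eta> sm D x = br S \<eta> sm D y"
  shows "x - y \<in> bker S \<eta> sm D"
proof -
  have "x \<in> br S \<eta> sm D y" using br_self[of x D] assms by simp
  then obtain k where "k \<in> bker S \<eta> sm D" "x = y + k" using br_memD by blast
  then show ?thesis by simp
qed

lemma rep_fix:
  assumes D: "subgroup D G" and a: "a \<in> fixpts S \<eta> D"
  shows "(SOME x. x \<in> br S \<eta> sm D a) \<in> fixpts S \<eta> D"
proof -
  obtain k where k: "k \<in> bker S \<eta> sm D" "(SOME x. x \<in> br S \<eta> sm D a) = a + k"
    using br_memD[OF rep_mem] by blast
  have "k \<in> fixpts S \<eta> D" using bker_fixed[OF D k(1)] .
  then show ?thesis using a k(2) unfolding fixpts_def by (simp add: act_add)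
qed

end


theorem lemma5p3:
  fixes S :: "('g, 'b) monoid_scheme" and \<eta> :: "'g \<Rightarrow> 'a::ring_1"
    and sm :: "'r::idom \<Rightarrow> 'a \<Rightarrow> 'a" and p :: nat
    and P Q R :: "'g set" and \<phi> \<psi> :: "'g \<Rightarrow> 'g" and u\<phi> u\<psi> :: "'a set"
  assumes "CLN_domain p TYPE('r)"
    and "group S" and "finite (carrier S)" and "\<exists>n. order S = p ^ n"
    and "divisible S \<eta> sm"
    and "Fiso S \<eta> sm P Q \<phi>" and "Fiso S \<eta> sm Q R \<psi>"
    and "twisted_unit S \<eta> sm P \<phi> u\<phi>" and "twisted_unit S \<eta> sm Q \<psi> u\<psi>"
  shows "twisted_unit S \<eta> sm P (\<psi> \<circ> \<phi>) (bmul S \<eta> sm \<psi> \<phi> P u\<psi> u\<phi>)"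
proof -
  have ia: "interior_alg S \<eta> sm" using assms(5) unfolding divisible_def bifree_def by blast
  have oa: "O_algebra sm" and eo: "\<eta> \<one>\<^bsub>S\<^esub> = 1"
    and em: "\<And>s t. s \<in> carrier S \<Longrightarrow> t \<in> carrier S \<Longrightarrow> \<eta> (s \<otimes>\<^bsub>S\<^esub> t) = \<eta> s * \<eta> t"
    using ia unfolding interior_alg_def by auto
  interpret balg S \<eta> sm by (rule balg.intro[OF assms(2) oa em eo])
  let ?\<phi>i = "inv_into P \<phi>" and ?\<psi>i = "inv_into Q \<psi>"
  have sP: "subgroup P S" and sQ: "subgroup Q S" and h\<phi>: "homon S P \<phi>" and inj\<phi>: "inj_on \<phi> P"
    and im\<phi>: "\<phi> ` P = Q" and h\<phi>i: "homon S Q ?\<phi>i"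
    using assms(6) unfolding Fiso_def Fmor_def by (auto intro: homon_hom)
  have sR: "subgroup R S" and h\<psi>: "homon S Q \<psi>" and inj\<psi>: "inj_on \<psi> Q"
    and im\<psi>: "\<psi> ` Q = R" and h\<psi>i: "homon S R ?\<psi>i"
    using assms(7) unfolding Fiso_def Fmor_def by (auto intro: homon_hom)
  have Pc: "P \<subseteq> carrier S" using sP subgroup.subset by blast
  have Qc: "Q \<subseteq> carrier S" using sQ subgroup.subset by blast
  have Rc: "R \<subseteq> carrier S" using sR subgroup.subset by blast
  have \<phi>i1: "\<And>y. y \<in> Q \<Longrightarrow> ?\<phi>i y \<in> P \<and> \<phi> (?\<phi>i y) = y"
    using im\<phi> by (auto intro: inv_into_into f_inv_into_f)
  have \<phi>i2: "\<And>x. x \<in> P \<Longrightarrow> ?\<phi>i (\<phi> x) = x" using inv_into_f_f[OF inj\<phi>] by blast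
  have \<psi>i1: "\<And>y. y \<in> R \<Longrightarrow> ?\<psi>i y \<in> Q \<and> \<psi> (?\<psi>i y) = y"
    using im\<psi> by (auto intro: inv_into_into f_inv_into_f)
  have \<psi>i2: "\<And>x. x \<in> Q \<Longrightarrow> ?\<psi>i (\<psi> x) = x" using inv_into_f_f[OF inj\<psi>] by blast
  have \<phi>P: "\<phi> ` P \<subseteq> Q" using im\<phi> by simp
  have \<psi>iR: "?\<psi>i ` R \<subseteq> Q" using \<psi>i1 by blast
  have imc: "(\<psi> \<circ> \<phi>) ` P = R" by (simp only: image_comp[symmetric] im\<phi> im\<psi>)
  have hc: "homon S P (\<psi> \<circ> \<phi>)" by (rule homon_comp[OF h\<psi> h\<phi> \<phi>P])
  have hci: "homon S R (?\<phi>i \<circ> ?\<psi>i)" by (rule homon_comp[OF h\<phi>i h\<psi>i \<psi>iR])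
  have ci1: "\<And>y. y \<in> R \<Longrightarrow> (?\<phi>i \<circ> ?\<psi>i) y \<in> P \<and> (\<psi> \<circ> \<phi>) ((?\<phi>i \<circ> ?\<psi>i) y) = y"
    using \<phi>i1 \<psi>i1 by auto
  have ci2: "\<And>x. x \<in> P \<Longrightarrow> (?\<phi>i \<circ> ?\<psi>i) ((\<psi> \<circ> \<phi>) x) = x"
    using \<phi>i2 \<psi>i2 \<phi>P by auto
  have injc: "inj_on (\<psi> \<circ> \<phi>) P" using ci2 by (metis inj_on_inverseI)
  have ci3: "\<And>y. y \<in> R \<Longrightarrow> inv_into P (\<psi> \<circ> \<phi>) y = (?\<phi>i \<circ> ?\<psi>i) y"
  proof -
    fix y assume y: "y \<in> R"
    have "inv_into P (\<psi> \<circ> \<phi>) y = inv_into P (\<psi> \<circ> \<phi>) ((\<psi> \<circ> \<phi>) ((?\<phi>i \<circ> ?\<psi>i) y))" using ci1[OF y] by simp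
    also have "... = (?\<phi>i \<circ> ?\<psi>i) y" using inv_into_f_f[OF injc] ci1[OF y] by blast
    finally show "inv_into P (\<psi> \<circ> \<phi>) y = (?\<phi>i \<circ> ?\<psi>i) y" .
  qed
  have DidP: "Delta (inv_into P (\<psi> \<circ> \<phi>) \<circ> (\<psi> \<circ> \<phi>)) P = Delta id P"
  proof (rule Delta_cong)
    fix x assume x: "x \<in> P"
    show "(inv_into P (\<psi> \<circ> \<phi>) \<circ> (\<psi> \<circ> \<phi>)) x = id x"
      using inv_into_f_f[OF injc x] by (simp only: comp_apply id_apply)
  qed
  have Did2: "Delta ((?\<phi>i \<circ> ?\<psi>i) \<circ> (\<psi> \<circ> \<phi>)) P = Delta id P"
    by (rule Delta_cong) (use ci2 in simp)
  have Did3: "Delta (?\<phi>i \<circ> \<phi>) P = Delta id P"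
    by (rule Delta_cong) (use \<phi>i2 in simp)
  have Did4: "Delta (?\<psi>i \<circ> \<psi>) Q = Delta id Q"
    by (rule Delta_cong) (use \<psi>i2 in simp)
  have Dinv: "Delta (inv_into P (\<psi> \<circ> \<phi>)) R = Delta (?\<phi>i \<circ> ?\<psi>i) R"
    by (rule Delta_cong) (rule ci3)
  have sD\<phi>: "subgroup (Delta \<phi> P) G" by (rule Delta_subgroup[OF sP h\<phi>])
  have sD\<psi>: "subgroup (Delta \<psi> Q) G" by (rule Delta_subgroup[OF sQ h\<psi>])
  have sD\<phi>i: "subgroup (Delta ?\<phi>i Q) G" by (rule Delta_subgroup[OF sQ h\<phi>i])
  have sD\<psi>i: "subgroup (Delta ?\<psi>i R) G" by (rule Delta_subgroup[OF sR h\<psi>i])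
  have sDc: "subgroup (Delta (\<psi> \<circ> \<phi>) P) G" by (rule Delta_subgroup[OF sP hc])
  have hid: "homon S Q id" unfolding homon_def using Qc by auto
  obtain c0 where c0: "c0 \<in> fixpts S \<eta> (Delta \<phi> P)" "u\<phi> = br S \<eta> sm (Delta \<phi> P) c0"
    using assms(8) unfolding twisted_unit_def BQ_def by blast
  obtain v\<phi> where v\<phi>: "v\<phi> \<in> BQ S \<eta> sm ?\<phi>i Q"
      "bmul S \<eta> sm ?\<phi>i \<phi> P v\<phi> u\<phi> = bone S \<eta> sm P"
    using assms(8) im\<phi> unfolding twisted_unit_def by blast
  obtain c0' where c0': "c0' \<in> fixpts S \<eta> (Delta ?\<phi>i Q)" "v\<phi> = br S \<eta> sm (Delta ?\<phi>i Q) c0'"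
    using v\<phi>(1) unfolding BQ_def by blast
  obtain a0 where a0: "a0 \<in> fixpts S \<eta> (Delta \<psi> Q)" "u\<psi> = br S \<eta> sm (Delta \<psi> Q) a0"
    using assms(9) unfolding twisted_unit_def BQ_def by blast
  obtain v\<psi> where v\<psi>: "v\<psi> \<in> BQ S \<eta> sm ?\<psi>i R"
      "bmul S \<eta> sm ?\<psi>i \<psi> Q v\<psi> u\<psi> = bone S \<eta> sm Q"
    using assms(9) im\<psi> unfolding twisted_unit_def by blast
  obtain a0' where a0': "a0' \<in> fixpts S \<eta> (Delta ?\<psi>i R)" "v\<psi> = br S \<eta> sm (Delta ?\<psi>i R) a0'"
    using v\<psi>(1) unfolding BQ_def by blast
  define a where "a = (SOME x. x \<in> u\<psi>)"
  define c where "c = (SOME x. x \<in> u\<phi>)"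
  define a' where "a' = (SOME x. x \<in> v\<psi>)"
  define c' where "c' = (SOME x. x \<in> v\<phi>)"
  have fa: "a \<in> fixpts S \<eta> (Delta \<psi> Q)" unfolding a_def a0(2) by (rule rep_fix[OF sD\<psi> a0(1)])
  have fc: "c \<in> fixpts S \<eta> (Delta \<phi> P)" unfolding c_def c0(2) by (rule rep_fix[OF sD\<phi> c0(1)])
  have fa': "a' \<in> fixpts S \<eta> (Delta ?\<psi>i R)" unfolding a'_def a0'(2) by (rule rep_fix[OF sD\<psi>i a0'(1)])
  have fc': "c' \<in> fixpts S \<eta> (Delta ?\<phi>i Q)" unfolding c'_def c0'(2) by (rule rep_fix[OF sD\<phi>i c0'(1)])
  have k2: "a' * a - 1 \<in> bker S \<eta> sm (Delta id Q)"
    using br_eqD[of "Delta id Q" "a' * a" 1] v\<psi>(2) Did4 unfolding bmul_def bone_def a_def a'_def by simp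
  have k3: "c' * c - 1 \<in> bker S \<eta> sm (Delta id P)"
    using br_eqD[of "Delta id P" "c' * c" 1] v\<phi>(2) Did3 unfolding bmul_def bone_def c_def c'_def by simp
  define w where "w = bmul S \<eta> sm \<psi> \<phi> P u\<psi> u\<phi>"
  have w: "w = br S \<eta> sm (Delta (\<psi> \<circ> \<phi>) P) (a * c)" unfolding w_def bmul_def a_def c_def ..
  have fac: "a * c \<in> fixpts S \<eta> (Delta (\<psi> \<circ> \<phi>) P)" by (rule mult_fix[OF fa fc \<phi>P Qc])
  have wBQ: "w \<in> BQ S \<eta> sm (\<psi> \<circ> \<phi>) P" unfolding w BQ_def using fac by blast
  have fca: "c' * a' \<in> fixpts S \<eta> (Delta (?\<phi>i \<circ> ?\<psi>i) R)" by (rule mult_fix[OF fc' fa' \<psi>iR Qc])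
  define v where "v = br S \<eta> sm (Delta (inv_into P (\<psi> \<circ> \<phi>)) R) (c' * a')"
  have vBQ: "v \<in> BQ S \<eta> sm (inv_into P (\<psi> \<circ> \<phi>)) ((\<psi> \<circ> \<phi>) ` P)"
    unfolding v_def BQ_def imc Dinv using fca by blast
  define rv where "rv = (SOME x. x \<in> v)"
  define rw where "rw = (SOME x. x \<in> w)"
  obtain k0 where k0: "k0 \<in> bker S \<eta> sm (Delta (?\<phi>i \<circ> ?\<psi>i) R)" "rv = c' * a' + k0"
    using br_memD[OF rep_mem] unfolding rv_def v_def Dinv by blast
  obtain k1 where k1: "k1 \<in> bker S \<eta> sm (Delta (\<psi> \<circ> \<phi>) P)" "rw = a * c + k1"
    using br_memD[OF rep_mem] unfolding rw_def w by blast
  have frw: "rw \<in> fixpts S \<eta> (Delta (\<psi> \<circ> \<phi>) P)" unfolding rw_def w by (rule rep_fix[OF sDc fac])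
  have m1: "k0 * rw \<in> bker S \<eta> sm (Delta id P)"
    using bker_right[OF sP sR hci hci imc ci1 ci2 frw k0(1)] Did2 by simp
  have m2: "(c' * a') * k1 \<in> bker S \<eta> sm (Delta id P)"
    using bker_left[OF sP hc hci _ Rc fca k1(1)] imc Did2 by simp
  have m3a: "c' * (a' * a - 1) \<in> bker S \<eta> sm (Delta ?\<phi>i Q)"
    using bker_left[OF sQ hid h\<phi>i _ Qc fc' k2] by simp
  have m3: "c' * (a' * a - 1) * c \<in> bker S \<eta> sm (Delta id P)"
    using bker_right[OF sP sQ h\<phi>i h\<phi>i im\<phi> \<phi>i1 \<phi>i2 fc m3a] Did3 by simp
  have e1: "c' * a' * (a * c) = c' * c + c' * (a' * a - 1) * c"
  proof -
    have "c' * a' * (a * c) = c' * (1 + (a' * a - 1)) * c" by (simp add: mult.assoc)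
    also have "... = c' * c + c' * (a' * a - 1) * c" by (simp only: distrib_left distrib_right mult_1_right)
    finally show ?thesis .
  qed
  have e2: "rv * rw - 1 = k0 * rw + (c' * a') * k1 + c' * (a' * a - 1) * c + (c' * c - 1)"
  proof -
    have r1: "rv * rw = c' * a' * rw + k0 * rw" unfolding k0(2) by (simp only: distrib_right)
    have r2: "c' * a' * rw = c' * a' * (a * c) + (c' * a') * k1" unfolding k1(2) by (simp only: distrib_left)
    have "rv * rw = c' * a' * (a * c) + (c' * a') * k1 + k0 * rw" using r1 r2 by simp
    then show ?thesis using e1 by (simp add: algebra_simps)
  qed
  have "rv * rw - 1 \<in> bker S \<eta> sm (Delta id P)"
    unfolding e2 by (intro bker.add m1 m2 m3 k3)
  then have "bmul S \<eta> sm (inv_into P (\<psi> \<circ> \<phi>)) (\<psi> \<circ> \<phi>) P v w = bone S \<eta> sm P"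
    unfolding bmul_def bone_def DidP rv_def[symmetric] rw_def[symmetric] by (rule br_eq)
  then show ?thesis unfolding twisted_unit_def w_def[symmetric] using wBQ vBQ by blast
qed

end
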